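(* Let $N\ge 3$ and let $(a_i)_{i\in\mathbb{Z}_{2N}}$ and $(\bar a_i)_{i\in\mathbb{Z}_{2N}}$ be positive real numbers (indices taken modulo $2N$) satisfying, for all $n\in\mathbb{Z}_N$, $$\bar a_{2n-1}+\bar a_{2n}=a_{2n}+a_{2n+1},\qquad \bar a_{2n}\bar a_{2n+1}=a_{2n+1}a_{2n+2}.$$ For $1\le k\le N$ define $$h_k(a)=\sum_{\substack{1\le i_1\triangleleft i_2\triangleleft\cdots\triangleleft i_k\le 2N\\ (i_1,i_k)\neq(1,2N)}} a_{i_1}a_{i_2}\cdots a_{i_k},$$ and $h_{N+1}(a)=\prod_{i=1}^{2N}a_i$. Then $h_k(\bar a)=h_k(a)$ for all $1\le k\le N+1$.
   Context: For integers $i,j$, $i\triangleleft j$ means $i+1<j$. The sum in $h_k$ runs over index tuples $1\le i_1<\dots<i_k\le 2N$ with consecutive indices differing by at least $2$, excluding tuples with $i_1=1$ and $i_k=2N$ simultaneously. The displayed equations are the evolution equations of the discrete periodic Toda lattice, with $a_i=a_i^t$, $\bar a_i=a_i^{t+1}$. *)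

theory Defs
  imports Complex_Main
begin

text \<open>Index sets of h_k: strictly increasing tuples 1 <= i_1 < ... < i_k <= 2N with
  consecutive indices differing by at least 2, represented as k-element subsets of {1..2N}
  with no two elements adjacent, excluding those containing both 1 and 2N.\<close>
definition toda_index_sets :: "nat \<Rightarrow> nat \<Rightarrow> int set set" where
  "toda_index_sets N k =
     {S. S \<subseteq> {1..2 * int N} \<and> card S = k \<and>
         (\<forall>i\<in>S. \<forall>j\<in>S. i < j \<longrightarrow> i + 1 < j) \<and>
         \<not> (1 \<in> S \<and> 2 * int N \<in> S)}"

definition toda_h :: "nat \<Rightarrow> nat \<Rightarrow> (int \<Rightarrow> real) \<Rightarrow> real" where
  "toda_h N k a = (\<Sum>S\<in>toda_index_sets N k. \<Prod>i\<in>S. a i)"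

definition toda_h_top :: "nat \<Rightarrow> (int \<Rightarrow> real) \<Rightarrow> real" where
  "toda_h_top N a = (\<Prod>i\<in>{1..2 * int N}. a i)"

end

theory Submission imports Defs begin

type_synonym mat = "bool \<Rightarrow> bool \<Rightarrow> real"

definition mm :: "mat \<Rightarrow> mat \<Rightarrow> mat" where
  "mm A B = (\<lambda>i j. A i False * B False j + A i True * B True j)"
definition mI :: mat where "mI = (\<lambda>i j. if i = j then 1 else 0)"
definition tr :: "mat \<Rightarrow> real" where "tr A = A False False + A True True"
definition dt :: "mat \<Rightarrow> real" where
  "dt A = A False False * A True True - A False True * A True False"

lemma mm_assoc: "mm (mm A B) C = mm A (mm B C)"
  by (simp add: mm_def fun_eq_iff algebra_simps)
lemma mm_I1[simp]: "mm mI A = A" by (simp add: mm_def mI_def fun_eq_iff)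
lemma mm_I2[simp]: "mm A mI = A" by (simp add: mm_def mI_def fun_eq_iff)
lemma tr_comm: "tr (mm A B) = tr (mm B A)" by (simp add: mm_def tr_def algebra_simps)
lemma dt_mm: "dt (mm A B) = dt A * dt B" by (simp add: mm_def dt_def algebra_simps)
lemma dt_I[simp]: "dt mI = 1" by (simp add: dt_def mI_def)

fun PM :: "(int \<Rightarrow> mat) \<Rightarrow> int \<Rightarrow> nat \<Rightarrow> mat" where
  "PM f i 0 = mI"
| "PM f i (Suc m) = mm (f i) (PM f (i+1) m)"

lemma PM_add: "PM f i (m+n) = mm (PM f i m) (PM f (i + int m) n)"
  by (induction m arbitrary: i) (auto simp: mm_assoc add.assoc)

lemma PM_snoc: "PM f i (Suc m) = mm (PM f i m) (f (i + int m))"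
  using PM_add[of f i m 1] by simp

lemma PM_pairs: "PM (\<lambda>n. mm (f (2*n + c)) (f (2*n+c+1))) i m = PM f (2*i+c) (2*m)"
proof (induction m arbitrary: i)
  case 0 then show ?case by simp
next
  case (Suc m)
  have "PM f (2*i+c) (2*Suc m) = mm (f (2*i+c)) (mm (f (2*i+c+1)) (PM f (2*(i+1)+c) (2*m)))"
    by (simp add: algebra_simps)
  then show ?case using Suc by (simp add: mm_assoc)
qed

lemma PM_telescope:
  assumes "\<And>j. mm (A j) (G j) = mm (G (j-1)) (B j)"
  shows "mm (PM A i m) (G (i + int m - 1)) = mm (G (i-1)) (PM B i m)"
proof (induction m arbitrary: i)
  case 0 then show ?case by simp
next
  case (Suc m)
  have "mm (PM A i (Suc m)) (G (i + int (Suc m) - 1)) = mm (A i) (mm (PM A (i+1) m) (G (i + 1 + int m - 1)))"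
    by (simp add: mm_assoc algebra_simps)
  also have "\<dots> = mm (mm (A i) (G i)) (PM B (i+1) m)" using Suc.IH[of "i+1"] by (simp add: mm_assoc)
  also have "\<dots> = mm (G (i-1)) (PM B i (Suc m))" using assms by (simp add: mm_assoc)
  finally show ?case .
qed

lemma dt_PM: "dt (PM f i m) = (\<Prod>j<m. dt (f (i + int j)))"
  by (induction m arbitrary: i) (auto simp del: prod.lessThan_Suc simp add: dt_mm prod.lessThan_Suc_shift algebra_simps)

lemma PM_shift:
  assumes "m \<ge> 1" "f (1 + int m) = f 1"
  shows "tr (PM f 2 m) = tr (PM f 1 m) \<and> dt (PM f 2 m) = dt (PM f 1 m)"
proof -
  obtain k where k: "m = Suc k" using assms(1) by (cases m) auto
  have e1: "PM f 1 m = mm (f 1) (PM f 2 k)" using k by simp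
  have e2: "PM f 2 m = mm (PM f 2 k) (f 1)" using k PM_snoc[of f 2 k] assms(2) by (simp add: add.commute)
  show ?thesis unfolding e1 e2 using tr_comm dt_mm by (simp add: mult.commute)
qed


definition Tm :: "real \<Rightarrow> mat" where
  "Tm c = (\<lambda>s t. if s \<and> t then 0 else if t then c else 1)"

definition nadj :: "int set \<Rightarrow> bool" where
  "nadj S \<longleftrightarrow> (\<forall>i\<in>S. \<forall>j\<in>S. i < j \<longrightarrow> i + 1 < j)"

definition Ip :: "nat \<Rightarrow> int set set" where
  "Ip m = {S. S \<subseteq> {1..int m} \<and> nadj S}"

lemma Ip_finite: "finite (Ip m)"
  by (rule finite_subset[of _ "Pow {1..int m}"]) (auto simp: Ip_def)

lemma Ip_elem_finite: "S \<in> Ip m \<Longrightarrow> finite S"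
  unfolding Ip_def using finite_subset by blast

lemma path_sum:
  fixes w :: "int \<Rightarrow> real"
  assumes "m \<ge> 1"
  shows "PM (\<lambda>i. Tm (w i)) 1 m s t =
     (\<Sum>S\<in>{S\<in>Ip m. (int m \<in> S \<longleftrightarrow> t) \<and> (s \<longrightarrow> 1 \<notin> S)}. \<Prod>i\<in>S. w i)"
  using assms
proof (induction m arbitrary: t rule: nat_induct_at_least)
  case base
  have "Ip 1 = {{}, {1}}" by (auto simp: Ip_def nadj_def)
  moreover have "{S. (S = {} \<or> S = {1::int}) \<and> 1 \<notin> S} = {{}}" by auto
  moreover have "{S. (S = {} \<or> S = {1::int}) \<and> 1 \<in> S} = {{1}}" by auto
  ultimately show ?case
    by (cases s; cases t) (auto simp: Tm_def mm_def mI_def)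
next
  case (Suc m)
  define n where "n = int m"
  have n1: "n \<ge> 1" using Suc by (simp add: n_def)
  define C where "C S \<longleftrightarrow> (s \<longrightarrow> 1 \<notin> S)" for S :: "int set"
  have rec: "PM (\<lambda>i. Tm (w i)) 1 (Suc m) s t =
     PM (\<lambda>i. Tm (w i)) 1 m s False * Tm (w (n+1)) False t + PM (\<lambda>i. Tm (w i)) 1 m s True * Tm (w (n+1)) True t"
    unfolding PM_snoc by (simp add: mm_def n_def add.commute)
  show ?case
  proof (cases t)
    case False
    have "PM (\<lambda>i. Tm (w i)) 1 (Suc m) s t =
       (\<Sum>S\<in>{S\<in>Ip m. n \<notin> S \<and> C S}. \<Prod>i\<in>S. w i) + (\<Sum>S\<in>{S\<in>Ip m. n \<in> S \<and> C S}. \<Prod>i\<in>S. w i)"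
      using rec Suc.IH[of False] Suc.IH[of True] False by (simp add: Tm_def n_def C_def)
    also have "\<dots> = (\<Sum>S\<in>{S\<in>Ip m. C S}. \<Prod>i\<in>S. w i)"
      by (subst sum.union_disjoint[symmetric]) (auto intro: finite_subset[OF _ Ip_finite] intro!: sum.cong)
    also have "{S\<in>Ip m. C S} = {S\<in>Ip (Suc m). (int (Suc m) \<in> S \<longleftrightarrow> t) \<and> (s \<longrightarrow> 1 \<notin> S)}"
      using False apply (auto simp: Ip_def C_def n_def subset_iff)
      by (metis atLeastAtMost_iff int_ops(4) of_nat_Suc order_le_less zle_add1_eq_le)+
    finally show ?thesis .
  next
    case True
    have "PM (\<lambda>i. Tm (w i)) 1 (Suc m) s t =
       w (n+1) * (\<Sum>S\<in>{S\<in>Ip m. n \<notin> S \<and> C S}. \<Prod>i\<in>S. w i)"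
      using rec Suc.IH[of False] True by (simp add: Tm_def n_def C_def)
    also have "\<dots> = (\<Sum>S\<in>{S\<in>Ip m. n \<notin> S \<and> C S}. \<Prod>i\<in>insert (n+1) S. w i)"
      unfolding sum_distrib_left
    proof (rule sum.cong)
      fix S assume "S \<in> {S\<in>Ip m. n \<notin> S \<and> C S}"
      then have "finite S" "n+1 \<notin> S" by (auto simp: Ip_def n_def intro: finite_subset)
      then show "w (n+1) * prod w S = prod w (insert (n+1) S)" by simp
    qed simp
    also have "\<dots> = (\<Sum>S\<in>insert (n+1) ` {S\<in>Ip m. n \<notin> S \<and> C S}. \<Prod>i\<in>S. w i)"
    proof (rule sum.reindex[symmetric, unfolded comp_def])
      show "inj_on (insert (n+1)) {S\<in>Ip m. n \<notin> S \<and> C S}"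
      proof (rule inj_onI)
        fix x y assume xy: "x \<in> {S\<in>Ip m. n \<notin> S \<and> C S}" "y \<in> {S\<in>Ip m. n \<notin> S \<and> C S}"
          "insert (n + 1) x = insert (n + 1) y"
        then have "n+1 \<notin> x" "n+1 \<notin> y" by (auto simp: Ip_def n_def)
        then show "x = y" using xy(3) by (metis Diff_insert_absorb)
      qed
    qed
    also have "insert (n+1) ` {S\<in>Ip m. n \<notin> S \<and> C S} = {S\<in>Ip (Suc m). (int (Suc m) \<in> S \<longleftrightarrow> t) \<and> (s \<longrightarrow> 1 \<notin> S)}"
    proof
      show "insert (n+1) ` {S\<in>Ip m. n \<notin> S \<and> C S} \<subseteq> {S\<in>Ip (Suc m). (int (Suc m) \<in> S \<longleftrightarrow> t) \<and> (s \<longrightarrow> 1 \<notin> S)}"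
      proof
        fix T assume "T \<in> insert (n+1) ` {S\<in>Ip m. n \<notin> S \<and> C S}"
        then obtain S where S: "S \<subseteq> {1..n}" "nadj S" "n \<notin> S" "C S" and T: "T = insert (n+1) S"
          by (auto simp: Ip_def n_def)
        have "nadj T" unfolding T nadj_def
        proof (intro ballI impI)
          fix i j assume "i \<in> insert (n+1) S" "j \<in> insert (n+1) S" "i < j"
          then show "i + 1 < j"
          proof (cases "j = n+1")
            case True
            then have "i \<in> S" using \<open>i < j\<close> \<open>i \<in> insert (n+1) S\<close> by auto
            then have "i \<le> n" "i \<noteq> n" using S(1,3) by auto
            then show ?thesis using True by simp
          next
            case False
            then have "j \<in> S" using \<open>j \<in> insert (n+1) S\<close> by auto
            then have "j \<le> n" using S(1) by auto
            then have "i \<in> S" using \<open>i < j\<close> \<open>i \<in> insert (n+1) S\<close> by auto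
            then show ?thesis using \<open>j \<in> S\<close> \<open>i < j\<close> S(2) unfolding nadj_def by blast
          qed
        qed
        then show "T \<in> {S\<in>Ip (Suc m). (int (Suc m) \<in> S \<longleftrightarrow> t) \<and> (s \<longrightarrow> 1 \<notin> S)}"
          using S T True n1 by (auto simp: Ip_def C_def n_def)
      qed
    next
      show "{S\<in>Ip (Suc m). (int (Suc m) \<in> S \<longleftrightarrow> t) \<and> (s \<longrightarrow> 1 \<notin> S)} \<subseteq> insert (n+1) ` {S\<in>Ip m. n \<notin> S \<and> C S}"
      proof
        fix T assume T: "T \<in> {S\<in>Ip (Suc m). (int (Suc m) \<in> S \<longleftrightarrow> t) \<and> (s \<longrightarrow> 1 \<notin> S)}"
        then have T1: "T \<subseteq> {1..n+1}" "nadj T" "n+1 \<in> T" "s \<longrightarrow> 1 \<notin> T"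
          using True by (auto simp: Ip_def n_def add.commute)
        have "n \<notin> T" using T1(2,3) unfolding nadj_def by (metis less_add_one less_irrefl)
        then have "T - {n+1} \<in> {S\<in>Ip m. n \<notin> S \<and> C S}"
          using T1 by (auto simp: Ip_def nadj_def C_def n_def)
        moreover have "T = insert (n+1) (T - {n+1})" using T1 by auto
        ultimately show "T \<in> insert (n+1) ` {S\<in>Ip m. n \<notin> S \<and> C S}" by blast
      qed
    qed
    finally show ?thesis .
  qed
qed


definition Gm :: "real \<Rightarrow> mat" where
  "Gm d = (\<lambda>i j. if i then (if j then d else 1 - d) else (if j then 0 else 1))"
definition Gi :: "real \<Rightarrow> mat" where
  "Gi d = (\<lambda>i j. if i then (if j then 1/d else -(1-d)/d) else (if j then 0 else 1))"

lemma Gm_Gi: "d \<noteq> 0 \<Longrightarrow> mm (Gm d) (Gi d) = mI"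
  by (auto simp: fun_eq_iff mm_def Gm_def Gi_def mI_def field_simps)
lemma Gi_Gm: "d \<noteq> 0 \<Longrightarrow> mm (Gi d) (Gm d) = mI"
  by (auto simp: fun_eq_iff mm_def Gm_def Gi_def mI_def field_simps)
lemma dt_Gm: "dt (Gm d) = d" by (simp add: dt_def Gm_def)
lemma dt_Tm: "dt (Tm c) = - c" by (simp add: dt_def Tm_def)

lemma gauge:
  fixes b0 b1 b2 p q r x :: real
  assumes "b1 + b2 = p + q" "b0 * b1 = r * p" "b2 \<noteq> 0" "b0 \<noteq> 0"
  shows "mm (mm (Tm (b1*x)) (Tm (b2*x))) (Gm (q/b2)) = mm (Gm (r/b0)) (mm (Tm (p*x)) (Tm (q*x)))"
proof -
  have b1: "b1 = r * p / b0" using assms(2,4) by (simp add: field_simps)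
  have q: "q = b1 + b2 - p" using assms(1) by simp
  show ?thesis unfolding fun_eq_iff
    using assms(3,4) by (auto simp: mm_def Tm_def Gm_def field_simps q b1)
qed

lemma similar:
  assumes "mm X (Gm d) = mm (Gm d) Y" "d \<noteq> 0"
  shows "tr X = tr Y \<and> dt X = dt Y"
proof
  have "tr X = tr (mm (mm X (Gm d)) (Gi d))" using assms(2) by (simp add: mm_assoc Gm_Gi)
  also have "\<dots> = tr (mm (Gm d) (mm Y (Gi d)))" using assms(1) by (simp add: mm_assoc)
  also have "\<dots> = tr (mm (mm Y (Gi d)) (Gm d))" by (rule tr_comm)
  also have "\<dots> = tr Y" using assms(2) by (simp add: mm_assoc Gi_Gm)
  finally show "tr X = tr Y" .
  have "dt X * d = d * dt Y" using arg_cong[OF assms(1), of dt] by (simp add: dt_mm dt_Gm)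
  then show "dt X = dt Y" using assms(2) by simp
qed

definition Cyc :: "nat \<Rightarrow> int set set" where
  "Cyc N = {S\<in>Ip (2*N). \<not> (1 \<in> S \<and> 2 * int N \<in> S)}"

lemma trace_cyc:
  fixes w :: "int \<Rightarrow> real"
  assumes "N \<ge> 1"
  shows "tr (PM (\<lambda>i. Tm (w i)) 1 (2*N)) = (\<Sum>S\<in>Cyc N. \<Prod>i\<in>S. w i)"
proof -
  have "tr (PM (\<lambda>i. Tm (w i)) 1 (2*N)) =
    (\<Sum>S\<in>{S\<in>Ip (2*N). 2 * int N \<notin> S}. \<Prod>i\<in>S. w i) + (\<Sum>S\<in>{S\<in>Ip (2*N). 2 * int N \<in> S \<and> 1 \<notin> S}. \<Prod>i\<in>S. w i)"
    unfolding tr_def using assms by (simp add: path_sum)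
  also have "\<dots> = (\<Sum>S\<in>{S\<in>Ip (2*N). 2 * int N \<notin> S} \<union> {S\<in>Ip (2*N). 2 * int N \<in> S \<and> 1 \<notin> S}. \<Prod>i\<in>S. w i)"
    by (rule sum.union_disjoint[symmetric]) (auto intro: finite_subset[OF _ Ip_finite])
  also have "{S\<in>Ip (2*N). 2 * int N \<notin> S} \<union> {S\<in>Ip (2*N). 2 * int N \<in> S \<and> 1 \<notin> S} = Cyc N"
    by (auto simp: Cyc_def)
  finally show ?thesis .
qed

lemma cyc_poly:
  fixes a :: "int \<Rightarrow> real"
  shows "(\<Sum>S\<in>Cyc N. \<Prod>i\<in>S. a i * x) = (\<Sum>k\<le>2*N. toda_h N k a * x^k)"
proof -
  have fin: "finite (Cyc N)" unfolding Cyc_def by (auto intro: finite_subset[OF _ Ip_finite])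
  have "(\<Sum>S\<in>Cyc N. \<Prod>i\<in>S. a i * x) = (\<Sum>S\<in>Cyc N. x ^ card S * (\<Prod>i\<in>S. a i))"
    by (simp add: prod.distrib mult.commute)
  also have "\<dots> = (\<Sum>k\<in>{..2*N}. \<Sum>S\<in>{S. S \<in> Cyc N \<and> card S = k}. x ^ card S * (\<Prod>i\<in>S. a i))"
  proof (rule sum.group[symmetric, OF fin])
    show "finite {..2*N}" by simp
    show "card ` Cyc N \<subseteq> {..2 * N}"
    proof
      fix k assume "k \<in> card ` Cyc N"
      then obtain S where "S \<in> Cyc N" "k = card S" by auto
      then have "S \<subseteq> {1..2 * int N}" by (auto simp: Cyc_def Ip_def)
      then have "card S \<le> card {1..2 * int N}" by (rule card_mono[rotated]) simp
      then show "k \<in> {..2*N}" using \<open>k = card S\<close> by simp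
    qed
  qed
  also have "\<dots> = (\<Sum>k\<le>2*N. toda_h N k a * x^k)"
  proof (rule sum.cong)
    fix k assume "k \<in> {..2*N}"
    have e: "{S. S \<in> Cyc N \<and> card S = k} = toda_index_sets N k"
      by (auto simp: Cyc_def Ip_def nadj_def toda_index_sets_def)
    show "(\<Sum>S\<in>{S. S \<in> Cyc N \<and> card S = k}. x ^ card S * (\<Prod>i\<in>S. a i)) = toda_h N k a * x^k"
      unfolding toda_h_def e[symmetric] sum_distrib_right by (intro sum.cong) (auto simp: mult.commute)
  qed simp
  finally show ?thesis .
qed


lemma conj_rel:
  fixes N :: nat and a abar :: "int \<Rightarrow> real" and x :: real
  assumes N: "N \<ge> 1"
    and pa: "\<forall>i. a (i + 2 * int N) = a i"
    and pb: "\<forall>i. abar (i + 2 * int N) = abar i"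
    and ap: "\<forall>i. a i > 0"
    and bp: "\<forall>i. abar i > 0"
    and s: "\<forall>n::int. abar (2*n - 1) + abar (2*n) = a (2*n) + a (2*n + 1)"
    and p: "\<forall>n::int. abar (2*n) * abar (2*n + 1) = a (2*n + 1) * a (2*n + 2)"
  shows "tr (PM (\<lambda>i. Tm (abar i * x)) 1 (2*N)) = tr (PM (\<lambda>i. Tm (a i * x)) 1 (2*N)) \<and>
         dt (PM (\<lambda>i. Tm (abar i * x)) 1 (2*N)) = dt (PM (\<lambda>i. Tm (a i * x)) 1 (2*N))"
proof -
  define Ta where "Ta = (\<lambda>i. Tm (a i * x))"
  define Tb where "Tb = (\<lambda>i. Tm (abar i * x))"
  define Q where "Q = (\<lambda>n. mm (Tb (2*n + -1)) (Tb (2*n + -1 + 1)))"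
  define P where "P = (\<lambda>n. mm (Ta (2*n + 0)) (Ta (2*n + 0 + 1)))"
  define dd where "dd = (\<lambda>n::int. a (2*n+1) / abar (2*n))"
  have g: "mm (Q j) (Gm (dd j)) = mm (Gm (dd (j-1))) (P j)" for j
  proof -
    have h1: "abar (2*j - 1) + abar (2*j) = a (2*j) + a (2*j + 1)" using s by blast
    have h2: "abar (2*j-2) * abar (2*j - 1) = a (2*j - 1) * a (2*j)"
      using p[rule_format, of "j-1"] by (simp add: algebra_simps)
    have "mm (mm (Tm (abar (2*j - 1)*x)) (Tm (abar (2*j)*x))) (Gm (a (2*j + 1)/abar (2*j)))
      = mm (Gm (a (2*j - 1)/abar (2*j-2))) (mm (Tm (a (2*j)*x)) (Tm (a (2*j + 1)*x)))"
      by (rule gauge[OF h1 h2]) (use bp in \<open>auto simp: less_imp_neq[symmetric]\<close>)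
    moreover have "dd (j-1) = a (2*j - 1)/abar (2*j-2)" by (simp add: dd_def algebra_simps)
    ultimately show ?thesis by (simp add: Q_def P_def Tb_def Ta_def dd_def)
  qed
  have tel: "mm (PM Q 1 N) (Gm (dd (1 + int N - 1))) = mm (Gm (dd (1-1))) (PM P 1 N)"
    by (rule PM_telescope) (rule g)
  have ddN: "dd (1 + int N - 1) = dd 0"
    using pa[rule_format, of 1] pb[rule_format, of 0] by (simp add: dd_def add.commute)
  have dd0: "dd 0 \<noteq> 0" using ap bp by (simp add: dd_def less_imp_neq[symmetric])
  have eQ: "PM Q 1 N = PM Tb 1 (2*N)" unfolding Q_def using PM_pairs[of Tb "-1" 1 N] by simp
  have eP: "PM P 1 N = PM Ta 2 (2*N)" unfolding P_def using PM_pairs[of Ta 0 1 N] by simp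
  have sim: "tr (PM Tb 1 (2*N)) = tr (PM Ta 2 (2*N)) \<and> dt (PM Tb 1 (2*N)) = dt (PM Ta 2 (2*N))"
    using similar[OF _ dd0] tel unfolding ddN eQ eP by simp
  have sh: "tr (PM Ta 2 (2*N)) = tr (PM Ta 1 (2*N)) \<and> dt (PM Ta 2 (2*N)) = dt (PM Ta 1 (2*N))"
    by (rule PM_shift) (use N pa in \<open>auto simp: Ta_def add.commute\<close>)
  show ?thesis using sim sh by (simp add: Ta_def Tb_def)
qed


theorem mainTheorem2:
  fixes N :: nat and a abar :: "int \<Rightarrow> real"
  assumes "N \<ge> 3"
    and "\<forall>i. a (i + 2 * int N) = a i"
    and "\<forall>i. abar (i + 2 * int N) = abar i"
    and "\<forall>i. a i > 0"
    and "\<forall>i. abar i > 0"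
    and "\<forall>n::int. abar (2*n - 1) + abar (2*n) = a (2*n) + a (2*n + 1)"
    and "\<forall>n::int. abar (2*n) * abar (2*n + 1) = a (2*n + 1) * a (2*n + 2)"
  shows "(\<forall>k\<in>{1..N}. toda_h N k abar = toda_h N k a) \<and> toda_h_top N abar = toda_h_top N a"
proof -
  have N: "N \<ge> 1" using assms(1) by simp
  note cr = conj_rel[OF N assms(2-7)]
  have "\<forall>x::real. (\<Sum>k\<le>2*N. toda_h N k abar * x^k) = (\<Sum>k\<le>2*N. toda_h N k a * x^k)"
  proof
    fix x :: real
    have "(\<Sum>k\<le>2*N. toda_h N k abar * x^k) = tr (PM (\<lambda>i. Tm (abar i * x)) 1 (2*N))"
      using trace_cyc[OF N, of "\<lambda>i. abar i * x"] cyc_poly[where N=N and a=abar and x=x] by simp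
    also have "\<dots> = tr (PM (\<lambda>i. Tm (a i * x)) 1 (2*N))" using cr[of x] by simp
    also have "\<dots> = (\<Sum>k\<le>2*N. toda_h N k a * x^k)"
      using trace_cyc[OF N, of "\<lambda>i. a i * x"] cyc_poly[where N=N and a=a and x=x] by simp
    finally show "(\<Sum>k\<le>2*N. toda_h N k abar * x^k) = (\<Sum>k\<le>2*N. toda_h N k a * x^k)" .
  qed
  then have c: "\<forall>k\<le>2*N. toda_h N k abar = toda_h N k a" by (simp only: polyfun_eq_coeffs)
  have dtf: "dt (PM (\<lambda>i. Tm (f i * 1)) 1 (2*N)) = (\<Prod>j<2*N. f (1 + int j))" for f :: "int \<Rightarrow> real"
    by (simp add: dt_PM dt_Tm prod_uminus)
  have top: "toda_h_top N f = (\<Prod>j<2*N. f (1 + int j))" for f :: "int \<Rightarrow> real"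
  proof -
    have im: "{1..2 * int N} = (\<lambda>j. 1 + int j) ` {..<2*N}"
    proof
      show "{1..2 * int N} \<subseteq> (\<lambda>j. 1 + int j) ` {..<2*N}"
      proof
        fix i assume "i \<in> {1..2 * int N}"
        then have "i = 1 + int (nat (i - 1))" "nat (i-1) < 2*N" by auto
        then show "i \<in> (\<lambda>j. 1 + int j) ` {..<2*N}" by blast
      qed
    qed auto
    show ?thesis unfolding toda_h_top_def im by (subst prod.reindex) (auto simp: inj_on_def)
  qed
  show ?thesis using c cr[of 1] dtf[of a] dtf[of abar] top[of a] top[of abar] by auto
qed

end
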